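(* Let $k \ge 3$ be an integer and let $G=(V,E)$ be a graph. Let $G'=(V',E')$ be the star with $V'=\{a\}\cup V$ (where $a\notin V$ is a new vertex) and $E'=\{(a,v): v\in V\}$, and let $P=\{(u,v): (u,v)\in E\}$. Then $G$ admits a proper vertex coloring using $k$ colors if and only if the edges of $G'$ can be colored using $k$ colors such that for every pair $(u,v)\in P$ there is a geodesic rainbow path between $u$ and $v$ in $G'$.
   Context: Edge colorings are not required to be proper. A path in an edge-colored graph is a rainbow path if no two of its edges have the same color. A geodesic path between $u$ and $v$ is a shortest path between $u$ and $v$. *)

theory Defs
  imports Main
begin

definition simple_graph :: "'a set \<Rightarrow> 'a set set \<Rightarrow> bool" where
  "simple_graph V E \<longleftrightarrow> finite V \<and>
     (\<forall>e\<in>E. \<exists>u v. e = {u, v} \<and> u \<noteq> v \<and> u \<in> V \<and> v \<in> V)"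

fun path_edges :: "'a list \<Rightarrow> 'a set list" where
  "path_edges (x # y # xs) = {x, y} # path_edges (y # xs)"
| "path_edges _ = []"

definition is_path :: "'a set \<Rightarrow> 'a set set \<Rightarrow> 'a list \<Rightarrow> bool" where
  "is_path V E xs \<longleftrightarrow> xs \<noteq> [] \<and> distinct xs \<and> set xs \<subseteq> V \<and>
     set (path_edges xs) \<subseteq> E"

definition path_between :: "'a set \<Rightarrow> 'a set set \<Rightarrow> 'a \<Rightarrow> 'a \<Rightarrow> 'a list \<Rightarrow> bool" where
  "path_between V E u v xs \<longleftrightarrow> is_path V E xs \<and> hd xs = u \<and> last xs = v"

definition geodesic :: "'a set \<Rightarrow> 'a set set \<Rightarrow> 'a \<Rightarrow> 'a \<Rightarrow> 'a list \<Rightarrow> bool" where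
  "geodesic V E u v xs \<longleftrightarrow> path_between V E u v xs \<and>
     (\<forall>ys. path_between V E u v ys \<longrightarrow> length xs \<le> length ys)"

definition rainbow :: "('a set \<Rightarrow> 'c) \<Rightarrow> 'a list \<Rightarrow> bool" where
  "rainbow c xs \<longleftrightarrow> distinct (map c (path_edges xs))"

definition proper_vertex_coloring :: "'a set \<Rightarrow> 'a set set \<Rightarrow> nat \<Rightarrow> ('a \<Rightarrow> nat) \<Rightarrow> bool" where
  "proper_vertex_coloring V E k f \<longleftrightarrow> (\<forall>v\<in>V. f v < k) \<and>
     (\<forall>u v. {u, v} \<in> E \<longrightarrow> f u \<noteq> f v)"

definition edge_coloring :: "'a set set \<Rightarrow> nat \<Rightarrow> ('a set \<Rightarrow> nat) \<Rightarrow> bool" where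
  "edge_coloring E k c \<longleftrightarrow> (\<forall>e\<in>E. c e < k)"

end

theory Submission
  imports Defs
begin

lemma star_edge: "{x, y} \<in> {{a, v} | v. v \<in> V} \<Longrightarrow> x = a \<or> y = a"
  by (auto simp: doubleton_eq_iff)

lemma star_path:
  assumes "a \<notin> V" "u \<in> V" "v \<in> V" "u \<noteq> v"
    and "path_between (insert a V) {{a, w} | w. w \<in> V} u v ys"
  shows "ys = [u, a, v]"
proof -
  have P: "ys \<noteq> []" "distinct ys" "set (path_edges ys) \<subseteq> {{a, w} | w. w \<in> V}" "hd ys = u" "last ys = v"
    using assms(5) unfolding path_between_def is_path_def by auto
  show ?thesis
  proof (cases ys)
    case Nil then show ?thesis using P by simp
  next
    case (Cons x r)
    show ?thesis
    proof (cases r)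
      case Nil then show ?thesis using P Cons assms by simp
    next
      case (Cons y r2)
      note c1 = \<open>ys = x # r\<close>
      have xu: "x = u" using P c1 by simp
      have "{x, y} \<in> {{a, w} | w. w \<in> V}" using P c1 Cons by simp
      hence ya: "y = a" using star_edge[of x y a V] xu assms by auto
      show ?thesis
      proof (cases r2)
        case Nil then show ?thesis using P c1 Cons ya assms by simp
      next
        case (Cons z r3)
        show ?thesis
        proof (cases r3)
          case Nil then show ?thesis using P c1 \<open>r = y # r2\<close> Cons xu ya by simp
        next
          case (Cons t r4)
          have "{z, t} \<in> {{a, w} | w. w \<in> V}" using P c1 \<open>r = y # r2\<close> \<open>r2 = z # r3\<close> Cons by simp
          hence "z = a \<or> t = a" by (rule star_edge)
          moreover have "z \<noteq> a" "t \<noteq> a" using P(2) c1 \<open>r = y # r2\<close> \<open>r2 = z # r3\<close> Cons ya by auto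
          ultimately show ?thesis by simp
        qed
      qed
    qed
  qed
qed

theorem lemma1:
  fixes V :: "'a set" and E :: "'a set set" and a :: 'a and k :: nat
  assumes "k \<ge> 3"
    and "simple_graph V E"
    and "a \<notin> V"
  shows "(\<exists>f. proper_vertex_coloring V E k f) \<longleftrightarrow>
    (\<exists>c. edge_coloring {{a, v} | v. v \<in> V} k c \<and>
       (\<forall>u v. (u, v) \<in> {(x, y). {x, y} \<in> E} \<longrightarrow>
          (\<exists>xs. geodesic (insert a V) {{a, v} | v. v \<in> V} u v xs \<and> rainbow c xs)))"
proof -
  let ?S = "{{a, v} | v. v \<in> V}"
  have EV: "u \<in> V \<and> v \<in> V \<and> u \<noteq> v" if "{u, v} \<in> E" for u v
    using assms(2) that unfolding simple_graph_def by (auto simp: doubleton_eq_iff)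
  have pb: "path_between (insert a V) ?S u v [u, a, v]" if "u \<in> V" "v \<in> V" "u \<noteq> v" for u v
    using that assms(3) unfolding path_between_def is_path_def by auto
  show ?thesis
  proof
    assume "\<exists>f. proper_vertex_coloring V E k f"
    then obtain f where f: "proper_vertex_coloring V E k f" by blast
    define c where "c e = f (THE w. w \<in> e - {a})" for e
    have cv: "c {a, w} = f w" if "w \<noteq> a" for w
    proof -
      have "{a, w} - {a} = {w}" using that by auto
      thus ?thesis unfolding c_def by simp
    qed
    show "\<exists>c. edge_coloring ?S k c \<and>
       (\<forall>u v. (u, v) \<in> {(x, y). {x, y} \<in> E} \<longrightarrow>
          (\<exists>xs. geodesic (insert a V) ?S u v xs \<and> rainbow c xs))"
    proof (rule exI[of _ c], intro conjI allI impI)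
      show "edge_coloring ?S k c"
        unfolding edge_coloring_def
      proof
        fix e assume "e \<in> ?S"
        then obtain w where w: "e = {a, w}" "w \<in> V" by blast
        have "w \<noteq> a" using w assms(3) by auto
        thus "c e < k" using w cv f unfolding proper_vertex_coloring_def by simp
      qed
    next
      fix u v assume "(u, v) \<in> {(x, y). {x, y} \<in> E}"
      hence uv: "{u, v} \<in> E" by simp
      note e = EV[OF uv]
      have g: "geodesic (insert a V) ?S u v [u, a, v]"
        unfolding geodesic_def using pb e star_path[OF assms(3)] by auto
      have "f u \<noteq> f v" using f uv unfolding proper_vertex_coloring_def by blast
      moreover have "c {a, u} = f u" "c {a, v} = f v" using cv[of u] cv[of v] e assms(3)
        by fastforce+
      moreover have "{u, a} = {a, u}" by (rule insert_commute)
      ultimately have "rainbow c [u, a, v]" unfolding rainbow_def by simp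
      with g show "\<exists>xs. geodesic (insert a V) ?S u v xs \<and> rainbow c xs" by blast
    qed
  next
    assume "\<exists>c. edge_coloring ?S k c \<and>
       (\<forall>u v. (u, v) \<in> {(x, y). {x, y} \<in> E} \<longrightarrow>
          (\<exists>xs. geodesic (insert a V) ?S u v xs \<and> rainbow c xs))"
    then obtain c where c: "edge_coloring ?S k c"
      and h: "\<And>u v. {u, v} \<in> E \<Longrightarrow> \<exists>xs. geodesic (insert a V) ?S u v xs \<and> rainbow c xs"
      by auto
    have "proper_vertex_coloring V E k (\<lambda>w. c {a, w})"
      unfolding proper_vertex_coloring_def
    proof (intro conjI ballI allI impI)
      fix w assume "w \<in> V" thus "c {a, w} < k" using c unfolding edge_coloring_def by auto
    next
      fix u v assume uv: "{u, v} \<in> E"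
      note e = EV[OF uv]
      obtain xs where "geodesic (insert a V) ?S u v xs" "rainbow c xs" using h[OF uv] by blast
      hence "xs = [u, a, v]" "rainbow c xs"
        using star_path[OF assms(3)] e unfolding geodesic_def by auto
      hence "c {u, a} \<noteq> c {a, v}" unfolding rainbow_def by simp
      thus "c {a, u} \<noteq> c {a, v}" by (simp add: insert_commute)
    qed
    thus "\<exists>f. proper_vertex_coloring V E k f" by blast
  qed
qed

end
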